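(* Let $\mathcal{P}=(|K|,V)$ be a polyhedral model and $x_1,x_2\in|K|$. Then $x_1\equiv_\eta x_2$ if and only if $x_1\approx_\triangle x_2$.
   Context: Fix a set PL of proposition letters. A simplex $\sigma\subseteq\mathbb{R}^m$ is the convex hull of $d+1$ affinely independent points; its faces are the simplices spanned by nonempty subsets of its vertices; its relative interior (cell) is $\tilde\sigma=\{\sum_i\lambda_iv_i:\lambda_i\in(0,1],\sum_i\lambda_i=1\}$. A simplicial complex $K$ is a finite set of simplices in $\mathbb{R}^m$ closed under faces, any two of which intersect in a common face or in $\emptyset$. The polyhedron $|K|$ is the union of its simplices with the subspace topology; the cells partition $|K|$. A polyhedral model is $\mathcal{P}=(|K|,V)$ with $V:\mathrm{PL}\to\mathcal{P}(|K|)$, each $V(p)$ a union of cells. A topological path from $x$ is a continuous $\pi:[0,1]\to|K|$ with $\pi(0)=x$. SLCS$_\eta$ formulas: $\Phi::=p\mid\neg\Phi\mid\Phi_1\wedge\Phi_2\mid\eta(\Phi_1,\Phi_2)$; $x\models p$ iff $x\in V(p)$; negation, conjunction standard; $x\models\eta(\Phi_1,\Phi_2)$ iff some topological path $\pi$ from $x$ has $\pi(1)\models\Phi_2$ and $\pi(r)\models\Phi_1$ for all $r\in[0,1)$. $x_1\equiv_\eta x_2$ means $x_1,x_2$ satisfy the same SLCS$_\eta$ formulas. A weak simplicial bisimulation is a symmetric relation $B\subseteq|K|\times|K|$ such that whenever $B(x_1,x_2)$: (1) for all $p$, $x_1\in V(p)$ iff $x_2\in V(p)$; (2) for each topological path $\pi_1$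 from $x_1$ there is a topological path $\pi_2$ from $x_2$ with $B(\pi_1(1),\pi_2(1))$ and such that for all $r_2\in[0,1)$ there is $r_1\in[0,1)$ with $B(\pi_1(r_1),\pi_2(r_2))$. $x_1\approx_\triangle x_2$ iff some weak simplicial bisimulation contains $(x_1,x_2)$. *)

theory Defs
  imports "HOL-Analysis.Analysis"
begin

definition simplex_of :: "'a::euclidean_space set \<Rightarrow> 'a set \<Rightarrow> bool" where
  "simplex_of C \<sigma> \<longleftrightarrow> finite C \<and> C \<noteq> {} \<and> \<not> affine_dependent C \<and> \<sigma> = convex hull C"

definition is_simplex :: "'a::euclidean_space set \<Rightarrow> bool" where
  "is_simplex \<sigma> \<longleftrightarrow> (\<exists>C. simplex_of C \<sigma>)"

definition simplex_face :: "'a::euclidean_space set \<Rightarrow> 'a set \<Rightarrow> bool" where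
  "simplex_face \<tau> \<sigma> \<longleftrightarrow> (\<exists>C D. simplex_of C \<sigma> \<and> D \<subseteq> C \<and> D \<noteq> {} \<and> \<tau> = convex hull D)"

definition cell :: "'a::euclidean_space set \<Rightarrow> 'a set" where
  "cell \<sigma> = {x. \<exists>C l. simplex_of C \<sigma> \<and> (\<forall>v\<in>C. 0 < l v \<and> l v \<le> 1) \<and>
                        sum l C = 1 \<and> x = (\<Sum>v\<in>C. l v *\<^sub>R v)}"

definition simplicial_complex :: "'a::euclidean_space set set \<Rightarrow> bool" where
  "simplicial_complex K \<longleftrightarrow> finite K \<and> (\<forall>\<sigma>\<in>K. is_simplex \<sigma>) \<and>
     (\<forall>\<sigma>\<in>K. \<forall>\<tau>. simplex_face \<tau> \<sigma> \<longrightarrow> \<tau> \<in> K) \<and>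
     (\<forall>\<sigma>\<in>K. \<forall>\<tau>\<in>K. \<sigma> \<inter> \<tau> = {} \<or> (simplex_face (\<sigma> \<inter> \<tau>) \<sigma> \<and> simplex_face (\<sigma> \<inter> \<tau>) \<tau>))"

definition carrier_poly :: "'a::euclidean_space set set \<Rightarrow> 'a set" where
  "carrier_poly K = \<Union>K"

definition polyhedral_model :: "'a::euclidean_space set set \<Rightarrow> ('p \<Rightarrow> 'a set) \<Rightarrow> bool" where
  "polyhedral_model K V \<longleftrightarrow> simplicial_complex K \<and>
     (\<forall>p. \<exists>S\<subseteq>K. V p = \<Union>(cell ` S))"

definition topo_path :: "'a::euclidean_space set set \<Rightarrow> 'a \<Rightarrow> (real \<Rightarrow> 'a) \<Rightarrow> bool" where
  "topo_path K x \<pi> \<longleftrightarrow> continuous_on {0..1} \<pi> \<and> \<pi> ` {0..1} \<subseteq> carrier_poly K \<and> \<pi> 0 = x"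

datatype 'p slcs = Atom 'p | Neg "'p slcs" | Conj "'p slcs" "'p slcs" | Eta "'p slcs" "'p slcs"

primrec sat :: "'a::euclidean_space set set \<Rightarrow> ('p \<Rightarrow> 'a set) \<Rightarrow> 'a \<Rightarrow> 'p slcs \<Rightarrow> bool" where
  "sat K V x (Atom p) \<longleftrightarrow> x \<in> V p"
| "sat K V x (Neg \<phi>) \<longleftrightarrow> \<not> sat K V x \<phi>"
| "sat K V x (Conj \<phi> \<psi>) \<longleftrightarrow> sat K V x \<phi> \<and> sat K V x \<psi>"
| "sat K V x (Eta \<phi> \<psi>) \<longleftrightarrow> (\<exists>\<pi>. topo_path K x \<pi> \<and> sat K V (\<pi> 1) \<psi> \<and>
                                   (\<forall>r\<in>{0..<1}. sat K V (\<pi> r) \<phi>))"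

definition eta_equiv :: "'a::euclidean_space set set \<Rightarrow> ('p \<Rightarrow> 'a set) \<Rightarrow> 'a \<Rightarrow> 'a \<Rightarrow> bool" where
  "eta_equiv K V x1 x2 \<longleftrightarrow> (\<forall>\<phi>. sat K V x1 \<phi> \<longleftrightarrow> sat K V x2 \<phi>)"

definition weak_simp_bisim :: "'a::euclidean_space set set \<Rightarrow> ('p \<Rightarrow> 'a set) \<Rightarrow> ('a \<Rightarrow> 'a \<Rightarrow> bool) \<Rightarrow> bool" where
  "weak_simp_bisim K V B \<longleftrightarrow>
     (\<forall>x y. B x y \<longrightarrow> x \<in> carrier_poly K \<and> y \<in> carrier_poly K) \<and>
     (\<forall>x y. B x y \<longrightarrow> B y x) \<and>
     (\<forall>x1 x2. B x1 x2 \<longrightarrow>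
        (\<forall>p. x1 \<in> V p \<longleftrightarrow> x2 \<in> V p) \<and>
        (\<forall>\<pi>1. topo_path K x1 \<pi>1 \<longrightarrow>
           (\<exists>\<pi>2. topo_path K x2 \<pi>2 \<and> B (\<pi>1 1) (\<pi>2 1) \<and>
                 (\<forall>r2\<in>{0..<1}. \<exists>r1\<in>{0..<1}. B (\<pi>1 r1) (\<pi>2 r2)))))"

definition weak_simp_bisimilar :: "'a::euclidean_space set set \<Rightarrow> ('p \<Rightarrow> 'a set) \<Rightarrow> 'a \<Rightarrow> 'a \<Rightarrow> bool" where
  "weak_simp_bisimilar K V x1 x2 \<longleftrightarrow> (\<exists>B. weak_simp_bisim K V B \<and> B x1 x2)"

end

theory Submission
  imports Defs
begin

lemma cell_rel:
  fixes \<sigma> :: "'a::euclidean_space set"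
  assumes "is_simplex \<sigma>"
  shows "cell \<sigma> = rel_interior \<sigma>"
proof
  show "cell \<sigma> \<subseteq> rel_interior \<sigma>"
  proof
    fix x assume "x \<in> cell \<sigma>"
    then obtain C l where C: "simplex_of C \<sigma>" "\<forall>v\<in>C. 0 < l v \<and> l v \<le> 1"
      "sum l C = 1" "x = (\<Sum>v\<in>C. l v *\<^sub>R v)" unfolding cell_def by blast
    then have ind: "\<not> affine_dependent C" unfolding simplex_of_def by blast
    have "x \<in> rel_interior (convex hull C)"
      unfolding rel_interior_convex_hull_explicit[OF ind] using C by blast
    then show "x \<in> rel_interior \<sigma>" using C unfolding simplex_of_def by simp
  qed
next
  show "rel_interior \<sigma> \<subseteq> cell \<sigma>"
  proof
    fix x assume x: "x \<in> rel_interior \<sigma>"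
    obtain C where C: "simplex_of C \<sigma>" using assms unfolding is_simplex_def by blast
    then have ind: "\<not> affine_dependent C" and fin: "finite C" and s: "\<sigma> = convex hull C"
      unfolding simplex_of_def by auto
    have "x \<in> rel_interior (convex hull C)" using x s by simp
    then obtain u where u: "\<forall>v\<in>C. 0 < u v" "sum u C = 1" "(\<Sum>v\<in>C. u v *\<^sub>R v) = x"
      unfolding rel_interior_convex_hull_explicit[OF ind] by blast
    have "\<forall>v\<in>C. u v \<le> 1"
    proof
      fix v assume "v \<in> C"
      then have "u v \<le> sum u C" using fin u(1)
        by (intro member_le_sum) (auto simp: less_imp_le)
      then show "u v \<le> 1" using u(2) by simp
    qed
    then show "x \<in> cell \<sigma>" unfolding cell_def using C u by fastforce
  qed
qed

lemma cells_disjoint: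
  fixes K :: "'a::euclidean_space set set"
  assumes K: "simplicial_complex K" and s: "\<sigma> \<in> K" "\<tau> \<in> K"
    and x: "x \<in> cell \<sigma>" "x \<in> cell \<tau>"
  shows "\<sigma> = \<tau>"
proof -
  have sim: "is_simplex \<sigma>" "is_simplex \<tau>" using K s unfolding simplicial_complex_def by auto
  have xr: "x \<in> rel_interior \<sigma>" "x \<in> rel_interior \<tau>" using x cell_rel sim by auto
  then have "x \<in> \<sigma> \<inter> \<tau>" using rel_interior_subset by blast
  then have f: "simplex_face (\<sigma> \<inter> \<tau>) \<sigma>" "simplex_face (\<sigma> \<inter> \<tau>) \<tau>"
    using K s unfolding simplicial_complex_def by blast+
  have fo: "(\<sigma> \<inter> \<tau>) face_of \<sigma>" if sf: "simplex_face (\<sigma> \<inter> \<tau>) \<sigma>" for \<sigma> \<tau> :: "'a set"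
  proof -
    obtain C D where "simplex_of C \<sigma>" "D \<subseteq> C" "\<sigma> \<inter> \<tau> = convex hull D"
      using sf unfolding simplex_face_def by blast
    then show ?thesis
      using face_of_convex_hull_affine_independent unfolding simplex_of_def by metis
  qed
  have "\<sigma> \<inter> \<tau> = \<sigma>"
    using face_of_disjoint_rel_interior[OF fo[OF f(1)]] xr \<open>x \<in> \<sigma> \<inter> \<tau>\<close> by blast
  moreover have "\<tau> \<inter> \<sigma> = \<tau>"
    using face_of_disjoint_rel_interior[OF fo[of \<tau> \<sigma>]] f(2) xr \<open>x \<in> \<sigma> \<inter> \<tau>\<close>
    by (metis Int_commute disjoint_iff)
  ultimately show ?thesis by blast
qed

lemma cell_cover:
  fixes K :: "'a::euclidean_space set set"
  assumes K: "simplicial_complex K" and x: "x \<in> carrier_poly K"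
  shows "\<exists>\<sigma>\<in>K. x \<in> cell \<sigma>"
proof -
  obtain \<sigma> where s: "\<sigma> \<in> K" "x \<in> \<sigma>" using x unfolding carrier_poly_def by blast
  obtain C where C: "simplex_of C \<sigma>" using K s unfolding simplicial_complex_def is_simplex_def by blast
  then have ind: "\<not> affine_dependent C" and fin: "finite C" and sc: "\<sigma> = convex hull C"
    unfolding simplex_of_def by auto
  obtain u where u: "\<forall>v\<in>C. 0 \<le> u v" "sum u C = 1" "(\<Sum>v\<in>C. u v *\<^sub>R v) = x"
    using s(2) sc convex_hull_finite[OF fin] by blast
  define D where "D = {v\<in>C. 0 < u v}"
  have DC: "D \<subseteq> C" unfolding D_def by auto
  have finD: "finite D" using fin DC finite_subset by blast
  have z: "\<forall>v\<in>C - D. u v = 0" using u(1) unfolding D_def by force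
  have sD: "sum u D = 1" using u(2) sum.mono_neutral_left[OF fin DC z] by simp
  have xD: "(\<Sum>v\<in>D. u v *\<^sub>R v) = x"
    using u(3) sum.mono_neutral_left[OF fin DC, of "\<lambda>v. u v *\<^sub>R v"] z by simp
  have Dne: "D \<noteq> {}" using sD by auto
  have sD': "simplex_of D (convex hull D)"
    unfolding simplex_of_def using finD Dne affine_independent_subset[OF ind DC] by simp
  have "simplex_face (convex hull D) \<sigma>" unfolding simplex_face_def using C DC Dne by blast
  then have "convex hull D \<in> K" using K s unfolding simplicial_complex_def by blast
  moreover have "\<forall>v\<in>D. u v \<le> 1"
  proof
    fix v assume "v \<in> D"
    then have "u v \<le> sum u D" using finD unfolding D_def
      by (intro member_le_sum) auto
    then show "u v \<le> 1" using sD by simp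
  qed
  then have "x \<in> cell (convex hull D)"
    unfolding cell_def using sD' sD xD D_def by fastforce
  ultimately show ?thesis by blast
qed

lemma cell_props:
  fixes \<sigma> :: "'a::euclidean_space set"
  assumes "is_simplex \<sigma>"
  shows "convex (cell \<sigma>)" "cell \<sigma> \<subseteq> \<sigma>"
proof -
  have "convex \<sigma>" using assms unfolding is_simplex_def simplex_of_def
    using convex_convex_hull by blast
  then show "convex (cell \<sigma>)" using cell_rel[OF assms] convex_rel_interior by simp
  show "cell \<sigma> \<subseteq> \<sigma>" using cell_rel[OF assms] rel_interior_subset by simp
qed

lemma cell_invariant:
  fixes K :: "'a::euclidean_space set set" and V :: "'p \<Rightarrow> 'a set"
  assumes M: "polyhedral_model K V" and s: "\<sigma> \<in> K"
  shows "x \<in> cell \<sigma> \<Longrightarrow> y \<in> cell \<sigma> \<Longrightarrow> sat K V x \<phi> = sat K V y \<phi>"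
proof (induction \<phi> arbitrary: x y)
  case (Atom p)
  have K: "simplicial_complex K" using M unfolding polyhedral_model_def by blast
  obtain S where S: "S \<subseteq> K" "V p = \<Union>(cell ` S)" using M unfolding polyhedral_model_def by blast
  have "z \<in> V p \<longleftrightarrow> \<sigma> \<in> S" if "z \<in> cell \<sigma>" for z
    using S cells_disjoint[OF K] s that by blast
  then show ?case using Atom by simp
next
  case (Neg \<phi>)
  have "sat K V x \<phi> = sat K V y \<phi>" by (rule Neg.IH[OF Neg.prems])
  then show ?case by simp
next
  case (Conj \<phi>1 \<phi>2)
  have "sat K V x \<phi>1 = sat K V y \<phi>1" by (rule Conj.IH(1)[OF Conj.prems])
  moreover have "sat K V x \<phi>2 = sat K V y \<phi>2" by (rule Conj.IH(2)[OF Conj.prems])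
  ultimately show ?case by simp
next
  case (Eta \<phi> \<psi>)
  have K: "simplicial_complex K" using M unfolding polyhedral_model_def by blast
  have sim: "is_simplex \<sigma>" using K s unfolding simplicial_complex_def by blast
  have cs: "cell \<sigma> \<subseteq> carrier_poly K"
    using cell_props(2)[OF sim] s unfolding carrier_poly_def by blast
  have one: "sat K V y (Eta \<phi> \<psi>)" if xy: "x \<in> cell \<sigma>" "y \<in> cell \<sigma>" and
    h: "sat K V x (Eta \<phi> \<psi>)" for x y
  proof -
    obtain \<pi> where p: "topo_path K x \<pi>" "sat K V (\<pi> 1) \<psi>" "\<forall>r\<in>{0..<1}. sat K V (\<pi> r) \<phi>"
      using h by auto
    have sx: "sat K V x \<phi>" using p(1,3) unfolding topo_path_def by force
    have seg: "closed_segment y x \<subseteq> cell \<sigma>"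
      using cell_props(1)[OF sim] xy closed_segment_subset by blast
    define \<pi>' where "\<pi>' = linepath y x +++ \<pi>"
    have pp: "path \<pi>" using p(1) unfolding topo_path_def path_def by blast
    have "path \<pi>'" unfolding \<pi>'_def
      using pp p(1) unfolding topo_path_def by (intro path_join_imp) (auto simp: pathstart_def)
    moreover have "path_image \<pi>' \<subseteq> carrier_poly K"
    proof -
      have "path_image \<pi> \<subseteq> carrier_poly K" using p(1) unfolding topo_path_def path_image_def by blast
      moreover have "path_image (linepath y x) \<subseteq> carrier_poly K" using seg cs by simp
      ultimately show ?thesis using path_image_join_subset[of "linepath y x" \<pi>] unfolding \<pi>'_def by blast
    qed
    moreover have "\<pi>' 0 = y" unfolding \<pi>'_def joinpaths_def linepath_def by simp
    ultimately have tp: "topo_path K y \<pi>'"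
      unfolding topo_path_def path_def path_image_def by blast
    have e1: "\<pi>' 1 = \<pi> 1" unfolding \<pi>'_def joinpaths_def by simp
    have "sat K V (\<pi>' r) \<phi>" if r: "r \<in> {0..<1}" for r
    proof (cases "r \<le> 1/2")
      case True
      then have "\<pi>' r = linepath y x (2 * r)" unfolding \<pi>'_def joinpaths_def by simp
      moreover have "linepath y x (2*r) \<in> closed_segment y x"
        using r True by (intro linepath_in_path) auto
      ultimately have "\<pi>' r \<in> cell \<sigma>" using seg by auto
      then show ?thesis using Eta.IH(1)[OF xy(1)] sx by blast
    next
      case False
      then have "\<pi>' r = \<pi> (2 * r - 1)" unfolding \<pi>'_def joinpaths_def by simp
      moreover have "2 * r - 1 \<in> {0..<1}" using r False by auto
      ultimately show ?thesis using p(3) by simp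
    qed
    then show ?thesis using tp e1 p(2) by auto
  qed
  show ?case using one Eta.prems by blast
qed

abbreviation Tt :: "'p slcs" where "Tt \<equiv> Neg (Conj (Atom undefined) (Neg (Atom undefined)))"

lemma conj_ex:
  assumes "finite A" and "\<forall>a\<in>A. \<exists>f. \<forall>x\<in>U. sat K V x f = P a x"
  shows "\<exists>\<phi>. \<forall>x\<in>U. sat K V x \<phi> = (\<forall>a\<in>A. P a x)"
  using assms
proof (induction A rule: finite_induct)
  case empty
  show ?case by (rule exI[of _ Tt]) simp
next
  case (insert a A)
  then obtain \<phi> where \<phi>: "\<forall>x\<in>U. sat K V x \<phi> = (\<forall>a\<in>A. P a x)" by blast
  obtain f where f: "\<forall>x\<in>U. sat K V x f = P a x" using insert.prems by blast
  show ?case by (rule exI[of _ "Conj f \<phi>"]) (use \<phi> f in auto)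
qed

lemma disj_ex:
  assumes "finite A" and "\<forall>a\<in>A. \<exists>f. \<forall>x\<in>U. sat K V x f = P a x"
  shows "\<exists>\<phi>. \<forall>x\<in>U. sat K V x \<phi> = (\<exists>a\<in>A. P a x)"
proof -
  have "\<forall>a\<in>A. \<exists>f. \<forall>x\<in>U. sat K V x f = (\<not> P a x)"
  proof
    fix a assume "a \<in> A"
    then obtain f where "\<forall>x\<in>U. sat K V x f = P a x" using assms(2) by blast
    then show "\<exists>f. \<forall>x\<in>U. sat K V x f = (\<not> P a x)" by (intro exI[of _ "Neg f"]) auto
  qed
  then obtain \<phi> where "\<forall>x\<in>U. sat K V x \<phi> = (\<forall>a\<in>A. \<not> P a x)"
    using conj_ex[OF assms(1), where U=U and K=K and V=V and P="\<lambda>a x. \<not> P a x"] by blast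
  then show ?thesis by (intro exI[of _ "Neg \<phi>"]) auto
qed

lemma bisim_sound:
  assumes B: "weak_simp_bisim K V B"
  shows "B x y \<Longrightarrow> sat K V x \<phi> = sat K V y \<phi>"
proof (induction \<phi> arbitrary: x y)
  case (Atom p)
  then show ?case using B unfolding weak_simp_bisim_def by simp
next
  case (Neg \<phi>)
  have "sat K V x \<phi> = sat K V y \<phi>" by (rule Neg.IH[OF Neg.prems])
  then show ?case by simp
next
  case (Conj \<phi>1 \<phi>2)
  have "sat K V x \<phi>1 = sat K V y \<phi>1" by (rule Conj.IH(1)[OF Conj.prems])
  moreover have "sat K V x \<phi>2 = sat K V y \<phi>2" by (rule Conj.IH(2)[OF Conj.prems])
  ultimately show ?case by simp
next
  case (Eta \<phi> \<psi>)
  have one: "sat K V y (Eta \<phi> \<psi>)" if bxy: "B x y" "sat K V x (Eta \<phi> \<psi>)" for x y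
  proof -
    obtain \<pi>1 where p: "topo_path K x \<pi>1" "sat K V (\<pi>1 1) \<psi>" "\<forall>r\<in>{0..<1}. sat K V (\<pi>1 r) \<phi>"
      using bxy(2) by auto
    obtain \<pi>2 where q: "topo_path K y \<pi>2" "B (\<pi>1 1) (\<pi>2 1)"
      "\<forall>r2\<in>{0..<1}. \<exists>r1\<in>{0..<1}. B (\<pi>1 r1) (\<pi>2 r2)"
      using B p(1) bxy(1) unfolding weak_simp_bisim_def by blast
    have "sat K V (\<pi>2 1) \<psi>" using Eta.IH(2)[OF q(2)] p(2) by simp
    moreover have "\<forall>r\<in>{0..<1}. sat K V (\<pi>2 r) \<phi>"
      using Eta.IH(1) q(3) p(3) by blast
    ultimately show ?thesis using q(1) by auto
  qed
  have "B y x" using Eta.prems B unfolding weak_simp_bisim_def by blast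
  then show ?case using one Eta.prems by blast
qed

theorem theorem2:
  fixes K :: "'a::euclidean_space set set" and V :: "'p \<Rightarrow> 'a set" and x1 x2 :: 'a
  assumes "polyhedral_model K V"
    and "x1 \<in> carrier_poly K" and "x2 \<in> carrier_poly K"
  shows "eta_equiv K V x1 x2 \<longleftrightarrow> weak_simp_bisimilar K V x1 x2"
proof
  assume "weak_simp_bisimilar K V x1 x2"
  then show "eta_equiv K V x1 x2"
    unfolding weak_simp_bisimilar_def eta_equiv_def using bisim_sound by blast
next
  assume eq: "eta_equiv K V x1 x2"
  let ?U = "carrier_poly K"
  have K: "simplicial_complex K" using assms(1) unfolding polyhedral_model_def by blast
  define R where "R = (\<lambda>\<sigma>. SOME z. z \<in> cell \<sigma>) ` {\<sigma>\<in>K. cell \<sigma> \<noteq> {}}"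
  have finR: "finite R" using K unfolding R_def simplicial_complex_def by simp
  have coverR: "\<exists>r\<in>R. eta_equiv K V y r" if yU: "y \<in> ?U" for y
  proof -
    obtain \<sigma> where s: "\<sigma> \<in> K" "y \<in> cell \<sigma>" using cell_cover[OF K yU] by blast
    let ?r = "SOME z. z \<in> cell \<sigma>"
    have "?r \<in> cell \<sigma>" using s(2) by (metis someI_ex)
    then have "eta_equiv K V y ?r"
      unfolding eta_equiv_def using cell_invariant[OF assms(1) s(1) s(2)] by blast
    moreover have "?r \<in> R" unfolding R_def using s by blast
    ultimately show ?thesis by blast
  qed
  have char: "\<exists>ch. \<forall>y\<in>?U. sat K V y ch = eta_equiv K V x y" for x
  proof -
    define A where "A = {r\<in>R. \<not> eta_equiv K V x r}"
    have "\<forall>r\<in>A. \<exists>f. sat K V x f \<and> \<not> sat K V r f"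
    proof
      fix r assume "r \<in> A"
      then obtain f where "sat K V x f \<noteq> sat K V r f" unfolding A_def eta_equiv_def by blast
      then show "\<exists>f. sat K V x f \<and> \<not> sat K V r f"
        by (cases "sat K V x f") (auto intro: exI[of _ "Neg f"])
    qed
    then obtain \<delta> where \<delta>: "\<forall>r\<in>A. sat K V x (\<delta> r) \<and> \<not> sat K V r (\<delta> r)" by metis
    have finA: "finite A" using finR unfolding A_def by simp
    obtain ch where ch: "\<forall>y\<in>?U. sat K V y ch = (\<forall>r\<in>A. sat K V y (\<delta> r))"
      using conj_ex[OF finA, where U="?U" and K=K and V=V and P="\<lambda>r y. sat K V y (\<delta> r)"] by blast
    have "sat K V y ch = eta_equiv K V x y" if y: "y \<in> ?U" for y
    proof
      assume sy: "sat K V y ch"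
      obtain r where r: "r \<in> R" "eta_equiv K V y r" using coverR[OF y] by blast
      have "r \<notin> A"
      proof
        assume "r \<in> A"
        then have "sat K V y (\<delta> r)" using sy ch y by blast
        then show False using r(2) \<delta> \<open>r \<in> A\<close> unfolding eta_equiv_def by blast
      qed
      then have "eta_equiv K V x r" using r(1) unfolding A_def by blast
      then show "eta_equiv K V x y" using r(2) unfolding eta_equiv_def by blast
    next
      assume "eta_equiv K V x y"
      then show "sat K V y ch" using ch y \<delta> unfolding eta_equiv_def by blast
    qed
    then show ?thesis by blast
  qed
  define B where "B = (\<lambda>x y. x \<in> ?U \<and> y \<in> ?U \<and> eta_equiv K V x y)"
  have "weak_simp_bisim K V B"
    unfolding weak_simp_bisim_def
  proof (intro conjI allI impI)
    fix x y assume "B x y" then show "x \<in> ?U" "y \<in> ?U" unfolding B_def by auto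
  next
    fix x y assume "B x y" then show "B y x" unfolding B_def eta_equiv_def by auto
  next
    fix x y p assume "B x y" then show "(x \<in> V p) = (y \<in> V p)"
      unfolding B_def eta_equiv_def using sat.simps(1) by metis
  next
    fix y1 y2 \<pi>1 assume b: "B y1 y2" and p1: "topo_path K y1 \<pi>1"
    have img: "\<pi>1 t \<in> ?U" if "t \<in> {0..1}" for t using p1 that unfolding topo_path_def by blast
    define S where "S = {r\<in>R. \<exists>t\<in>{0..<1}. eta_equiv K V (\<pi>1 t) r}"
    have finS: "finite S" using finR unfolding S_def by simp
    obtain \<Phi> where \<Phi>: "\<forall>z\<in>?U. sat K V z \<Phi> = (\<exists>r\<in>S. eta_equiv K V r z)"
      using disj_ex[OF finS, where U="?U" and K=K and V=V and P="\<lambda>r z. eta_equiv K V r z"] char by blast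
    obtain \<psi> where \<psi>: "\<forall>z\<in>?U. sat K V z \<psi> = eta_equiv K V (\<pi>1 1) z" using char by blast
    have "sat K V y1 (Eta \<Phi> \<psi>)"
    proof -
      have "sat K V (\<pi>1 1) \<psi>" using \<psi> img[of 1] unfolding eta_equiv_def by auto
      moreover have "sat K V (\<pi>1 t) \<Phi>" if t: "t \<in> {0..<1}" for t
      proof -
        have u: "\<pi>1 t \<in> ?U" using img t by auto
        obtain r where "r \<in> R" "eta_equiv K V (\<pi>1 t) r" using coverR[OF u] by blast
        then have "r \<in> S" "eta_equiv K V r (\<pi>1 t)" unfolding S_def eta_equiv_def using t by auto
        then show ?thesis using \<Phi> u by blast
      qed
      ultimately show ?thesis using p1 by auto
    qed
    then have "sat K V y2 (Eta \<Phi> \<psi>)" using b unfolding B_def eta_equiv_def by blast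
    then obtain \<pi>2 where p2: "topo_path K y2 \<pi>2" "sat K V (\<pi>2 1) \<psi>"
      "\<forall>r\<in>{0..<1}. sat K V (\<pi>2 r) \<Phi>" by auto
    have img2: "\<pi>2 t \<in> ?U" if "t \<in> {0..1}" for t using p2(1) that unfolding topo_path_def by blast
    have "B (\<pi>1 1) (\<pi>2 1)" unfolding B_def using img[of 1] img2[of 1] \<psi> p2(2) by auto
    moreover have "\<forall>r2\<in>{0..<1}. \<exists>r1\<in>{0..<1}. B (\<pi>1 r1) (\<pi>2 r2)"
    proof
      fix r2 :: real assume r2: "r2 \<in> {0..<1}"
      then have u: "\<pi>2 r2 \<in> ?U" using img2 by auto
      then obtain r where "r \<in> S" "eta_equiv K V r (\<pi>2 r2)" using \<Phi> p2(3) r2 by blast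
      then obtain t where t: "t \<in> {0..<1}" "eta_equiv K V (\<pi>1 t) r" "eta_equiv K V r (\<pi>2 r2)"
        unfolding S_def by blast
      then have "B (\<pi>1 t) (\<pi>2 r2)" unfolding B_def eta_equiv_def using img u by auto
      then show "\<exists>r1\<in>{0..<1}. B (\<pi>1 r1) (\<pi>2 r2)" using t(1) by blast
    qed
    ultimately show "\<exists>\<pi>2. topo_path K y2 \<pi>2 \<and> B (\<pi>1 1) (\<pi>2 1) \<and>
        (\<forall>r2\<in>{0..<1}. \<exists>r1\<in>{0..<1}. B (\<pi>1 r1) (\<pi>2 r2))" using p2(1) by blast
  qed
  moreover have "B x1 x2" unfolding B_def using assms eq by blast
  ultimately show "weak_simp_bisimilar K V x1 x2" unfolding weak_simp_bisimilar_def by blast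
qed

end
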